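(* Let $Y$ be a random variable with values in $S_b$ such that $uYu^*$ has the same distribution as $Y$ for all $u\in\mathbb{O}(d)$, and let $x_0\in S_a$. Then almost surely $x_0+Y\in S_{a+b}$ if $a+b\le d$, and almost surely $x_0+Y\in S_d=\mathcal{P}_d$ if $a+b\ge d$. Furthermore, if $x_0\in S_c$ and $x_0+Y\in S_{a+b}$ almost surely for some integer $a$ with $a+b<d$, then $c=a$.
   Context: $\mathcal{P}_d$ is the cone of real symmetric positive definite $d\times d$ matrices and $\overline{\mathcal{P}_d}$ its closure; for $b=0,\ldots,d$, $S_b=\{x\in\overline{\mathcal{P}_d}:\operatorname{rank}x=b\}$. $\mathbb{O}(d)$ is the orthogonal group and $u^*$ the transpose. *)

theory Defs
  imports "HOL-Analysis.Analysis" "HOL-Probability.Probability"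
begin

definition psd_mat :: "real^'d^'d \<Rightarrow> bool" where
  "psd_mat x \<longleftrightarrow> transpose x = x \<and> (\<forall>v. 0 \<le> v \<bullet> (x *v v))"

definition pd_mat :: "real^'d^'d \<Rightarrow> bool" where
  "pd_mat x \<longleftrightarrow> transpose x = x \<and> (\<forall>v. v \<noteq> 0 \<longrightarrow> 0 < v \<bullet> (x *v v))"

definition S_rank :: "nat \<Rightarrow> (real^'d^'d) set" where
  "S_rank b = {x. psd_mat x \<and> rank x = b}"

end

theory Submission
  imports Defs "HOL-Computational_Algebra.Polynomial"
begin


definition mker :: "real^'n^'n \<Rightarrow> (real^'n) set" where "mker A = {x. A *v x = 0}"

lemma symm_inner:
  fixes A :: "real^'n^'n"
  assumes "transpose A = A"
  shows "x \<bullet> (A *v y) = (A *v x) \<bullet> y"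
proof -
  have "x \<bullet> (A *v y) = (x v* A) \<bullet> y" by (simp add: dot_lmul_matrix)
  also have "x v* A = transpose A *v x" by simp
  also have "\<dots> = A *v x" using assms by simp
  finally show ?thesis .
qed

lemma psd_zero:
  fixes A :: "real^'n^'n"
  assumes "psd_mat A" "x \<bullet> (A *v x) = 0"
  shows "A *v x = 0"
proof (rule ccontr)
  assume ne: "A *v x \<noteq> 0"
  define w where "w = A *v x"
  define a where "a = w \<bullet> w"
  define c where "c = w \<bullet> (A *v w)"
  have sym: "transpose A = A" and pos: "\<And>v. 0 \<le> v \<bullet> (A *v v)" using assms(1) unfolding psd_mat_def by auto
  have a0: "a > 0" using ne unfolding a_def w_def by simp
  have c0: "c \<ge> 0" unfolding c_def using pos by simp
  have xw: "x \<bullet> (A *v w) = a" unfolding a_def w_def using symm_inner[OF sym] by simp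
  define t where "t = - a / (c + 1)"
  have "0 \<le> (x + t *\<^sub>R w) \<bullet> (A *v (x + t *\<^sub>R w))" using pos by blast
  also have "\<dots> = x \<bullet> (A *v x) + t * (x \<bullet> (A *v w)) + t * (w \<bullet> (A *v x)) + t * t * c"
    by (simp add: matrix_vector_right_distrib matrix_vector_mult_scaleR inner_add_left inner_add_right c_def algebra_simps)
  also have "\<dots> = 2 * t * a + t * t * c" using assms(2) xw by (simp add: a_def w_def)
  finally have ge: "0 \<le> 2 * t * a + t * t * c" .
  have tc: "t*(c+1) = -a" unfolding t_def using c0 by simp
  have "(2*t*a + t*t*c)*((c+1)*(c+1)) = 2*a*(t*(c+1))*(c+1) + c*(t*(c+1))*(t*(c+1))" by algebra
  also have "\<dots> = a*a*(-c-2)" unfolding tc by algebra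
  also have "\<dots> < 0" using a0 c0 by (intro mult_pos_neg) auto
  finally have "(2*t*a + t*t*c)*((c+1)*(c+1)) < 0" .
  moreover have "(c+1)*(c+1) > 0" using c0 by simp
  ultimately show False using ge by (simp add: mult_less_0_iff)
qed

lemma transpose_add: "transpose (A + B) = transpose A + transpose B"
  by (simp add: transpose_def vec_eq_iff)

lemma psd_add: "psd_mat A \<Longrightarrow> psd_mat B \<Longrightarrow> psd_mat (A + B)"
  unfolding psd_mat_def by (simp add: transpose_add matrix_vector_mult_add_rdistrib inner_add_right add_nonneg_nonneg)

lemma mker_add:
  assumes "psd_mat A" "psd_mat B"
  shows "mker (A + B) = mker A \<inter> mker B"
proof
  show "mker A \<inter> mker B \<subseteq> mker (A + B)" by (auto simp: mker_def matrix_vector_mult_add_rdistrib)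
  show "mker (A + B) \<subseteq> mker A \<inter> mker B"
  proof
    fix x assume "x \<in> mker (A + B)"
    then have "x \<bullet> (A *v x) + x \<bullet> (B *v x) = 0"
      by (simp add: mker_def matrix_vector_mult_add_rdistrib inner_add_right[symmetric])
    moreover have "0 \<le> x \<bullet> (A *v x)" "0 \<le> x \<bullet> (B *v x)" using assms unfolding psd_mat_def by auto
    ultimately have "x \<bullet> (A *v x) = 0" "x \<bullet> (B *v x) = 0" by linarith+
    then show "x \<in> mker A \<inter> mker B" using psd_zero assms by (auto simp: mker_def)
  qed
qed

lemma subspace_mker: "subspace (mker A)"
  unfolding mker_def subspace_def by (auto simp: matrix_vector_right_distrib matrix_vector_mult_scaleR)

lemma mker_rows: "mker (A::real^'n^'n) = {x. \<forall>r\<in>span (rows A). orthogonal r x}"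
proof safe
  fix x r assume "x \<in> mker A" "r \<in> span (rows A)"
  then show "orthogonal r x" using orthogonal_nullspace_rowspace orthogonal_commute by (metis mem_Collect_eq mker_def)
next
  fix x assume h: "\<forall>r\<in>span (rows A). orthogonal r x"
  have "(A *v x) $ i = 0" for i
  proof -
    have "row i A \<in> span (rows A)" by (auto simp: rows_def intro: span_base)
    then have "row i A \<bullet> x = 0" using h by (simp add: orthogonal_def)
    then show ?thesis by (simp add: matrix_vector_mult_def inner_vec_def row_def)
  qed
  then show "x \<in> mker A" by (simp add: mker_def vec_eq_iff)
qed

lemma rank_mker: "rank (A::real^'n^'n) + dim (mker A) = CARD('n)"
proof -
  have "dim {y \<in> UNIV. \<forall>x \<in> span (rows A). orthogonal x y} + dim (span (rows A)) = dim (UNIV :: (real^'n) set)"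
    by (rule dim_subspace_orthogonal_to_vectors) auto
  then show ?thesis by (simp add: mker_rows[of A] row_rank_def add.commute)
qed

lemma rank_eq_mker: "mker (A::real^'n^'n) = mker B \<Longrightarrow> rank A = rank B"
  using rank_mker[of A] rank_mker[of B] by simp



definition outer :: "real^'n \<Rightarrow> real^'n \<Rightarrow> real^'n^'n" where
  "outer v w = (\<chi> i j. v$i * w$j)"

lemma outer_mult: "outer v w *v x = (w \<bullet> x) *\<^sub>R v"
  by (simp add: outer_def matrix_vector_mult_def inner_vec_def sum_distrib_left vec_eq_iff algebra_simps)

lemma transpose_outer: "transpose (outer v w) = outer w v"
  by (simp add: outer_def transpose_def vec_eq_iff)

lemma psd_outer: "psd_mat (outer v v)"
  unfolding psd_mat_def by (simp add: transpose_outer outer_mult inner_commute)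

lemma mker_outer: "mker (outer v v) = {x. v \<bullet> x = 0}"
  by (auto simp: mker_def outer_mult)

lemma transpose_mul_inner: fixes B :: "real^'n^'m" shows "w \<bullet> (x v* B) = (B *v w) \<bullet> x"
proof -
  have "w \<bullet> (x v* B) = (x v* B) \<bullet> w" by (rule inner_commute)
  also have "\<dots> = x \<bullet> (B *v w)" by (rule dot_lmul_matrix)
  also have "\<dots> = (B *v w) \<bullet> x" by (rule inner_commute)
  finally show ?thesis .
qed

lemma outer_conj: "A ** outer v w ** transpose B = outer (A *v v) (B *v w)"
proof -
  have "(A ** outer v w ** transpose B) *v x = outer (A *v v) (B *v w) *v x" for x
  proof -
    have "(A ** outer v w ** transpose B) *v x = A *v (outer v w *v (transpose B *v x))"
      by (metis matrix_vector_mul_assoc)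
    also have "\<dots> = A *v ((w \<bullet> (x v* B)) *\<^sub>R v)" by (simp only: outer_mult transpose_matrix_vector)
    also have "\<dots> = ((B *v w) \<bullet> x) *\<^sub>R (A *v v)" by (simp only: transpose_mul_inner matrix_vector_mult_scaleR)
    also have "\<dots> = outer (A *v v) (B *v w) *v x" by (simp only: outer_mult)
    finally show ?thesis .
  qed
  then show ?thesis by (subst matrix_eq) blast
qed

lemma matrix_add_rdistrib: "((B + C) ** A) = (B ** A) + (C ** A)"
  by (vector matrix_matrix_mult_def sum.distrib[symmetric] field_simps)

lemma conj_add: "U ** (A + B) ** V = U ** A ** V + U ** B ** V"
  by (simp add: matrix_add_ldistrib matrix_add_rdistrib)

definition PE :: "(real^'n) set \<Rightarrow> real^'n^'n" where
  "PE E = (\<Sum>e\<in>E. outer e e)"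

lemma PE_insert: "finite E \<Longrightarrow> w \<notin> E \<Longrightarrow> PE (insert w E) = PE E + outer w w"
  by (simp add: PE_def add.commute)

lemma PE_empty[simp]: "PE {} = 0" by (simp add: PE_def)

lemma psd_zero_mat: "psd_mat (0::real^'n^'n)"
  unfolding psd_mat_def by (simp add: transpose_def vec_eq_iff)

lemma psd_PE: "finite E \<Longrightarrow> psd_mat (PE E)"
  by (induction E rule: finite_induct) (auto simp: PE_insert psd_add psd_outer psd_zero_mat)

lemma mker_PE: "finite E \<Longrightarrow> mker (PE E) = {x. \<forall>e\<in>E. e \<bullet> x = 0}"
proof (induction E rule: finite_induct)
  case empty then show ?case by (simp add: mker_def)
next
  case (insert w E)
  have "mker (PE (insert w E)) = mker (PE E) \<inter> mker (outer w w)"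
    using insert(1,2) by (simp add: PE_insert mker_add psd_PE psd_outer)
  then show ?case using insert(3) by (auto simp: mker_outer)
qed

lemma PE_conj:
  assumes "finite E" "\<forall>e\<in>E. U *v e = e"
  shows "U ** PE E ** transpose U = PE E"
  using assms
proof (induction E rule: finite_induct)
  case empty then show ?case by simp
next
  case (insert w E)
  then show ?case by (simp add: PE_insert conj_add outer_conj)
qed

lemma rank_conj:
  fixes U A :: "real^'n^'n"
  assumes "orthogonal_matrix U"
  shows "rank (U ** A ** transpose U) = rank A"
proof (rule antisym)
  show "rank (U ** A ** transpose U) \<le> rank A"
    by (metis le_trans matrix_mul_assoc rank_mul_le_left rank_mul_le_right)
  have o: "transpose U ** U = mat 1" using assms unfolding orthogonal_matrix_def by simp
  have "transpose U ** (U ** A ** transpose U) ** U = (transpose U ** U) ** A ** (transpose U ** U)"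
    by (simp add: matrix_mul_assoc)
  then have "A = transpose U ** (U ** A ** transpose U) ** U" using o by simp
  then show "rank A \<le> rank (U ** A ** transpose U)"
    by (metis le_trans matrix_mul_assoc rank_mul_le_left rank_mul_le_right)
qed



definition House :: "real^'n \<Rightarrow> real^'n^'n" where
  "House z = mat 1 - (2 / (z \<bullet> z)) *\<^sub>R outer z z"

lemma House_mult: "House z *v v = v - (2 * (z \<bullet> v) / (z \<bullet> z)) *\<^sub>R z"
  by (simp add: House_def matrix_vector_mult_diff_rdistrib scaleR_matrix_vector_assoc[symmetric] outer_mult)

lemma House_transpose: "transpose (House z) = House z"
proof -
  have "transpose (mat 1 - c *\<^sub>R outer z z) = mat 1 - c *\<^sub>R outer z z" for c :: real
    by (simp add: transpose_def outer_def mat_def vec_eq_iff mult.commute)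
  then show ?thesis by (simp add: House_def)
qed

lemma House_invol: "House z *v (House z *v v) = v"
proof (cases "z = 0")
  case True then show ?thesis by (simp add: House_mult)
next
  case False
  then have zz: "z \<bullet> z \<noteq> 0" by simp
  show ?thesis
    unfolding House_mult using zz by (simp add: inner_diff_right algebra_simps)
qed

lemma House_orth: "orthogonal_matrix (House z)"
proof -
  have "(House z ** House z) *v v = mat 1 *v v" for v
    by (simp add: matrix_vector_mul_assoc[symmetric] House_invol)
  then have "House z ** House z = mat 1" by (subst matrix_eq) blast
  then show ?thesis by (simp add: orthogonal_matrix House_transpose)
qed

lemma House_fix: "z \<bullet> v = 0 \<Longrightarrow> House z *v v = v"
  by (simp add: House_mult)

lemma House_swap:
  assumes "norm a = norm b"
  shows "House (a - b) *v a = b"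
proof (cases "a = b")
  case True then show ?thesis by (simp add: House_mult)
next
  case False
  have n: "a \<bullet> a = b \<bullet> b" using assms by (simp add: dot_square_norm)
  have zz: "(a - b) \<bullet> (a - b) = 2 * ((a - b) \<bullet> a)"
    using n by (simp add: inner_diff_left inner_diff_right inner_commute)
  have ne: "(a - b) \<bullet> (a - b) \<noteq> 0" using False by simp
  have "(a - b) \<bullet> a \<noteq> 0" using ne zz by (metis mult_zero_right)
  then have "2 * ((a - b) \<bullet> a) / ((a - b) \<bullet> (a - b)) = 1" by (simp only: zz) simp
  then have "House (a - b) *v a = a - 1 *\<^sub>R (a - b)" by (simp only: House_mult)
  then show ?thesis by simp
qed

lemma rank_add_outer_ge:
  fixes Q :: "real^'n^'n"
  assumes "psd_mat Q"
  shows "rank Q \<le> rank (Q + outer w w)"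
proof -
  have "mker (Q + outer w w) \<subseteq> mker Q" using mker_add[OF assms psd_outer] by auto
  then have "dim (mker (Q + outer w w)) \<le> dim (mker Q)" by (rule dim_subset)
  then show ?thesis using rank_mker[of Q] rank_mker[of "Q + outer w w"] by linarith
qed

lemma rank_add_outer_le:
  fixes Q :: "real^'n^'n"
  assumes "psd_mat Q"
  shows "rank (Q + outer w w) \<le> rank Q + 1"
proof (cases "w = 0")
  case True
  then have "outer w w = 0" by (simp add: outer_def vec_eq_iff)
  then show ?thesis by simp
next
  case False
  let ?S = "mker Q" and ?T = "{x. w \<bullet> x = 0}"
  have eq: "mker (Q + outer w w) = ?S \<inter> ?T" using mker_add[OF assms psd_outer] mker_outer by auto
  have "dim {x + y |x y. x \<in> ?S \<and> y \<in> ?T} + dim(?S \<inter> ?T) = dim ?S + dim ?T"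
    by (rule dim_sums_Int) (auto simp: subspace_mker subspace_hyperplane)
  moreover have "dim ?T = CARD('n) - 1" using dim_hyperplane[OF False] by simp
  moreover have "dim {x + y |x y. x \<in> ?S \<and> y \<in> ?T} \<le> CARD('n)"
    by (rule dim_subset_UNIV_cart)
  moreover have "CARD('n) \<ge> 1" by (simp add: Suc_le_eq)
  ultimately have "dim ?S \<le> dim (?S \<inter> ?T) + 1" by linarith
  moreover have "dim (mker (Q + outer w w)) = dim (?S \<inter> ?T)" using eq by simp
  ultimately show ?thesis using rank_mker[of Q] rank_mker[of "Q + outer w w"] by linarith
qed

lemma rank_add_outer_eq:
  fixes Q :: "real^'n^'n"
  assumes "psd_mat Q" "rank (Q + outer w w) = rank Q"
  shows "mker Q \<subseteq> {x. w \<bullet> x = 0}"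
proof -
  have eq: "mker (Q + outer w w) = mker Q \<inter> {x. w \<bullet> x = 0}" using mker_add[OF assms(1) psd_outer] mker_outer by auto
  have "dim (mker (Q + outer w w)) = dim (mker Q)" using rank_mker[of Q] rank_mker[of "Q + outer w w"] assms(2) by linarith
  then have "mker (Q + outer w w) = mker Q"
    by (intro subspace_dim_equal subspace_mker) (auto simp: eq)
  then show ?thesis using eq by auto
qed



lemma cont_mv: "continuous_on UNIV (\<lambda>p::(real^'n) \<times> (real^'n^'m). snd p *v fst p)"
  unfolding matrix_vector_mult_def
  by (intro continuous_intros)

lemma closed_mvT: "closed {p::(real^'n) \<times> (real^'n^'m). snd p *v fst p = 0}"
  by (rule closed_Collect_eq[OF cont_mv continuous_on_const])

lemma open_injS:
  fixes S :: "(real^'n) set"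
  assumes "subspace S"
  shows "open {y::real^'n^'m. \<forall>x\<in>S. y *v x = 0 \<longrightarrow> x = 0}"
proof -
  let ?K = "S \<inter> sphere 0 1"
  have K: "compact ?K" using closed_subspace[OF assms] by (intro closed_Int_compact) auto
  have cl: "closed {y. \<exists>x. x \<in> ?K \<and> (x, y) \<in> {p::(real^'n) \<times> (real^'n^'m). snd p *v fst p = 0}}"
    by (rule closed_compact_projection[OF K closed_mvT])
  have eq: "{y::real^'n^'m. \<forall>x\<in>S. y *v x = 0 \<longrightarrow> x = 0}
      = - {y. \<exists>x. x \<in> ?K \<and> (x, y) \<in> {p::(real^'n) \<times> (real^'n^'m). snd p *v fst p = 0}}"
  proof (rule set_eqI, rule iffI)
    fix y :: "real^'n^'m"
    assume h: "y \<in> {y. \<forall>x\<in>S. y *v x = 0 \<longrightarrow> x = 0}"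
    show "y \<in> - {y. \<exists>x. x \<in> ?K \<and> (x, y) \<in> {p. snd p *v fst p = 0}}"
      using h by auto
  next
    fix y :: "real^'n^'m"
    assume h: "y \<in> - {y. \<exists>x. x \<in> ?K \<and> (x, y) \<in> {p. snd p *v fst p = 0}}"
    show "y \<in> {y. \<forall>x\<in>S. y *v x = 0 \<longrightarrow> x = 0}"
    proof (clarify)
      fix x assume x: "x \<in> S" "y *v x = 0"
      show "x = 0"
      proof (rule ccontr)
        assume "x \<noteq> 0"
        let ?x = "(1 / norm x) *\<^sub>R x"
        have "?x \<in> ?K" using x \<open>x \<noteq> 0\<close> assms by (auto simp: subspace_scale)
        moreover have "y *v ?x = 0" using x by (simp add: matrix_vector_mult_scaleR)
        ultimately show False using h by auto
      qed
    qed
  qed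
  show ?thesis unfolding eq using cl by (simp add: open_Compl)
qed

lemma rank_ge_iff:
  fixes y :: "real^'n^'m"
  shows "k \<le> rank y \<longleftrightarrow> (\<exists>S. subspace S \<and> dim S = k \<and> (\<forall>x\<in>S. y *v x = 0 \<longrightarrow> x = 0))"
proof
  assume "k \<le> rank y"
  then have "k \<le> dim (rows y)" by (simp add: row_rank_def)
  then obtain T where T: "subspace T" "T \<subseteq> span (rows y)" "dim T = k"
    by (rule choose_subspace_of_subspace)
  have "\<forall>x\<in>T. y *v x = 0 \<longrightarrow> x = 0"
    using T(2) nullspace_inter_rowspace by blast
  then show "\<exists>S. subspace S \<and> dim S = k \<and> (\<forall>x\<in>S. y *v x = 0 \<longrightarrow> x = 0)" using T by blast
next
  assume "\<exists>S. subspace S \<and> dim S = k \<and> (\<forall>x\<in>S. y *v x = 0 \<longrightarrow> x = 0)"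
  then obtain S where S: "subspace S" "dim S = k" "\<forall>x\<in>S. y *v x = 0 \<longrightarrow> x = 0" by blast
  have inj: "inj_on ((*v) y) (span S)"
  proof (rule inj_onI)
    fix a c assume "a \<in> span S" "c \<in> span S" "y *v a = y *v c"
    moreover have "span S = S" using S(1) by (simp add: span_eq_iff)
    ultimately have "a - c \<in> S" "y *v (a - c) = 0"
      using S(1) by (auto simp: matrix_vector_mult_diff_distrib subspace_diff)
    then show "a = c" using S(3) by auto
  qed
  have "dim ((*v) y ` S) = dim S"
    by (rule dim_image_eq[OF matrix_vector_mul_linear inj])
  moreover have "dim ((*v) y ` S) \<le> dim (range (\<lambda>x. y *v x))"
    by (rule dim_subset) auto
  ultimately show "k \<le> rank y" using S(2) by (simp add: rank_dim_range)
qed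

lemma open_rank_ge: "open {y::real^'n^'m. k \<le> rank y}"
proof -
  have eq: "{y::real^'n^'m. k \<le> rank y} = (\<Union>S\<in>{S. subspace S \<and> dim S = k}. {y. \<forall>x\<in>S. y *v x = 0 \<longrightarrow> x = 0})"
    by (rule set_eqI) (simp add: rank_ge_iff)
  have "open (\<Union>S\<in>{S. subspace S \<and> dim S = k}. {y::real^'n^'m. \<forall>x\<in>S. y *v x = 0 \<longrightarrow> x = 0})"
    by (rule open_UN) (auto intro: open_injS)
  then show ?thesis unfolding eq .
qed

lemma rank_measurable: "(rank :: real^'n^'m \<Rightarrow> nat) \<in> borel \<rightarrow>\<^sub>M count_space UNIV"
proof -
  have "rank -` {k} = {y::real^'n^'m. k \<le> rank y} - {y. Suc k \<le> rank y}" for k by auto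
  then have "rank -` {k} \<in> sets (borel :: (real^'n^'m) measure)" for k
    by (simp only:) (intro sets.Diff borel_open open_rank_ge)
  then show ?thesis by (simp add: measurable_count_space_eq2_countable)
qed



lemma count_bound:
  fixes m L :: nat
  assumes "prob_space M" "\<And>t. t < m \<Longrightarrow> A t \<in> sets M"
    "\<And>\<omega>. \<omega> \<in> space M \<Longrightarrow> card {t. t < m \<and> \<omega> \<in> A t} \<le> L"
  shows "(\<Sum>t<m. measure M (A t)) \<le> real L"
proof -
  interpret prob_space M by fact
  have int: "integrable M (indicator (A t) :: 'a \<Rightarrow> real)" if "t < m" for t
    using assms(2)[OF that] by (intro integrable_real_indicator) (auto simp: less_top[symmetric])
  have "(\<Sum>t<m. measure M (A t)) = (\<Sum>t<m. integral\<^sup>L M (indicator (A t) :: 'a \<Rightarrow> real))"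
  proof (rule sum.cong)
    fix t assume "t \<in> {..<m}"
    then have "A t \<inter> space M = A t" using assms(2) sets.sets_into_space by auto
    then show "measure M (A t) = integral\<^sup>L M (indicator (A t))" by simp
  qed simp
  also have "\<dots> = integral\<^sup>L M (\<lambda>\<omega>. \<Sum>t<m. indicator (A t) \<omega> :: real)"
    using Bochner_Integration.integral_sum[where I="{..<m}" and M=M and f="\<lambda>t. indicator (A t) :: 'a \<Rightarrow> real"] int by auto
  also have "\<dots> \<le> integral\<^sup>L M (\<lambda>\<omega>. real L)"
  proof (rule integral_mono)
    show "integrable M (\<lambda>\<omega>. \<Sum>t<m. indicator (A t) \<omega> :: real)"
      using int by (intro Bochner_Integration.integrable_sum) auto
    show "integrable M (\<lambda>\<omega>. real L)" by simp
    fix \<omega> assume "\<omega> \<in> space M"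
    have "(\<Sum>t<m. indicator (A t) \<omega> :: real) = (\<Sum>t<m. of_bool (\<omega> \<in> A t))"
      by (simp add: indicator_def of_bool_def)
    also have "\<dots> = real (card ({..<m} \<inter> {t. \<omega> \<in> A t}))" using sum_of_bool_eq[where A="{..<m}" and P="\<lambda>t. \<omega> \<in> A t"] by simp
    also have "{..<m} \<inter> {t. \<omega> \<in> A t} = {t. t < m \<and> \<omega> \<in> A t}" by auto
    finally show "(\<Sum>t<m. indicator (A t) \<omega> :: real) \<le> real L"
      using assms(3)[OF \<open>\<omega> \<in> space M\<close>] by simp
  qed
  also have "\<dots> = real L" by (simp add: prob_space)
  finally show ?thesis .
qed

lemma rank_real_meas:
  assumes "continuous_on UNIV f"
  shows "(\<lambda>y. real (rank (f y :: real^'n^'m))) \<in> borel_measurable borel"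
proof -
  have "(\<lambda>y. rank (f y)) \<in> borel \<rightarrow>\<^sub>M count_space UNIV"
    by (rule measurable_compose[OF borel_measurable_continuous_onI[OF assms] rank_measurable])
  then show ?thesis
    by (rule measurable_compose) simp
qed



lemma root_count:
  fixes fs :: "(real^'n) list" and x :: "real^'n" and m :: nat
  assumes "\<exists>j<length fs. fs!j \<bullet> x \<noteq> 0"
  shows "card {t::nat. t < m \<and> (\<Sum>j<length fs. (real t ^ j) *\<^sub>R fs!j) \<bullet> x = 0} \<le> length fs"
proof -
  define L where "L = length fs"
  define p where "p = (\<Sum>j<L. monom (fs!j \<bullet> x) j)"
  have coeffp: "coeff p i = (if i < L then fs!i \<bullet> x else 0)" for i
  proof -
    have "coeff p i = (\<Sum>j<L. if i = j then fs!j \<bullet> x else 0)"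
      unfolding p_def coeff_sum by (intro sum.cong) (auto simp: coeff_monom)
    also have "\<dots> = (if i < L then fs!i \<bullet> x else 0)" by (simp add: sum.delta)
    finally show ?thesis .
  qed
  have pne: "p \<noteq> 0"
  proof
    assume "p = 0"
    then have "\<forall>j<L. fs!j \<bullet> x = 0" using coeffp by (metis coeff_0)
    then show False using assms by (auto simp: L_def)
  qed
  have degp: "degree p \<le> L" by (rule degree_le) (simp add: coeffp)
  have polyp: "poly p s = (\<Sum>j<L. (s ^ j) *\<^sub>R fs!j) \<bullet> x" for s
    unfolding p_def poly_sum by (simp add: inner_sum_left poly_monom mult.commute)
  have "real ` {t::nat. t < m \<and> (\<Sum>j<length fs. (real t ^ j) *\<^sub>R fs!j) \<bullet> x = 0} \<subseteq> {s. poly p s = 0}"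
    by (auto simp: polyp L_def)
  then have "card (real ` {t::nat. t < m \<and> (\<Sum>j<length fs. (real t ^ j) *\<^sub>R fs!j) \<bullet> x = 0}) \<le> card {s. poly p s = 0}"
    by (intro card_mono poly_roots_finite pne)
  also have "\<dots> \<le> degree p" by (rule card_poly_roots_bound[OF pne])
  finally show ?thesis using degp by (simp add: card_image L_def)
qed



lemma cont_conj: "continuous_on UNIV (\<lambda>y::real^'n^'n. U ** y ** V)"
  unfolding matrix_matrix_mult_def by (intro continuous_intros)

lemma key_step:
  fixes M :: "'w measure" and Y :: "'w \<Rightarrow> real^'n^'n" and E :: "(real^'n) set"
    and w :: "real^'n" and r :: nat
  assumes P: "prob_space M" and Ymeas: "Y \<in> borel_measurable M"
    and psdY: "\<forall>\<omega>\<in>space M. psd_mat (Y \<omega>)"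
    and inv: "\<forall>u :: real^'n^'n. orthogonal_matrix u \<longrightarrow>
           distr M borel (\<lambda>\<omega>. u ** Y \<omega> ** transpose u) = distr M borel Y"
    and fin: "finite E" and wE: "\<forall>e\<in>E. e \<bullet> w = 0" and nw: "norm w = 1"
    and AEr: "AE \<omega> in M. rank (PE E + Y \<omega>) = r" and rlt: "r < CARD('n)"
  shows "AE \<omega> in M. rank (PE E + Y \<omega> + outer w w) = Suc r"
proof -
  interpret prob_space M by (rule P)
  define V where "V = mker (PE E)"
  have V_eq: "V = {x. \<forall>e\<in>E. e \<bullet> x = 0}" using mker_PE[OF fin] by (simp add: V_def)
  have subV: "subspace V" by (simp add: V_def subspace_mker)
  have wV: "w \<in> V" using wE V_eq by simp
  obtain B where B: "0 \<notin> B" "B \<subseteq> V" "pairwise orthogonal B" "independent B" "span B = V"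
    using orthogonal_basis_subspace[OF subV] by metis
  have finB: "finite B" using B(4) by (rule finiteI_independent)
  obtain fs where fs: "set fs = B" "distinct fs" using finite_distinct_list[OF finB] by blast
  have Bne: "B \<noteq> {}"
  proof
    assume "B = {}"
    then have "V = {0}" using B(5) by simp
    then show False using wV nw by simp
  qed
  define L where "L = length fs"
  have L0: "0 < L" using Bne fs(1) by (cases fs) (auto simp: L_def)
  define f0 where "f0 = fs ! 0"
  have f0B: "f0 \<in> B" using L0 fs(1) by (auto simp: f0_def L_def)
  have f0ne: "f0 \<noteq> 0" using f0B B(1) by auto
  have fsB: "fs ! j \<in> B" if "j < L" for j using that fs(1) by (auto simp: L_def)
  define mt where "mt = (\<lambda>t::real. \<Sum>j<L. (t ^ j) *\<^sub>R fs!j)"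
  have mtV: "mt t \<in> V" for t
  proof -
    have "mt t \<in> span B" unfolding mt_def
      by (intro span_sum span_scale span_base fsB) auto
    then show ?thesis using B(5) by simp
  qed
  have f0mt: "f0 \<bullet> mt t = f0 \<bullet> f0" for t
  proof -
    have "f0 \<bullet> mt t = (\<Sum>j<L. t ^ j * (f0 \<bullet> fs!j))"
      by (simp add: mt_def inner_sum_right)
    also have "\<dots> = (\<Sum>j<L. if j = 0 then f0 \<bullet> f0 else 0)"
    proof (rule sum.cong)
      fix j assume j: "j \<in> {..<L}"
      show "t ^ j * (f0 \<bullet> fs!j) = (if j = 0 then f0 \<bullet> f0 else 0)"
      proof (cases "j = 0")
        case True then show ?thesis by (simp add: f0_def)
      next
        case False
        have "fs ! j \<noteq> f0" using False j fs(2) L0 by (auto simp: f0_def L_def nth_eq_iff_index_eq)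
        then have "orthogonal f0 (fs ! j)" using B(3) f0B fsB j by (auto simp: pairwise_def)
        then show ?thesis using False by (simp add: orthogonal_def)
      qed
    qed simp
    also have "\<dots> = f0 \<bullet> f0" using L0 by (simp add: sum.delta)
    finally show ?thesis .
  qed
  have mtne: "mt t \<noteq> 0" for t using f0mt[of t] f0ne by auto
  define wt where "wt = (\<lambda>t. (1 / norm (mt t)) *\<^sub>R mt t)"
  have nwt: "norm (wt t) = 1" for t using mtne[of t] by (simp add: wt_def)
  have wtV: "wt t \<in> V" for t using mtV[of t] subV by (simp add: wt_def subspace_scale)
  define u where "u = (\<lambda>t. House (w - wt t))"
  have uorth: "orthogonal_matrix (u t)" for t by (simp add: u_def House_orth)
  have ufix: "\<forall>e\<in>E. u t *v e = e" for t
  proof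
    fix e assume e: "e \<in> E"
    have "e \<bullet> w = 0" "e \<bullet> wt t = 0" using e wE wtV[of t] V_eq by auto
    then have "(w - wt t) \<bullet> e = 0" by (simp add: inner_commute[of "w - wt t"] inner_diff_right)
    then show "u t *v e = e" by (simp add: u_def House_fix)
  qed
  have uw: "u t *v w = wt t" for t using nw nwt[of t] by (simp add: u_def House_swap)
  have uwt: "u t *v wt t = w" for t using House_invol[of "w - wt t" w] uw[of t] by (simp add: u_def)
  define C where "C = (\<lambda>v. {y :: real^'n^'n. rank (PE E + y + outer v v) = rank (PE E + y)})"
  have conj1: "PE E + u t ** y ** transpose (u t) = u t ** (PE E + y) ** transpose (u t)" for t y
    by (simp add: conj_add PE_conj[OF fin ufix])
  have conj2: "PE E + u t ** y ** transpose (u t) + outer w w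
      = u t ** (PE E + y + outer (wt t) (wt t)) ** transpose (u t)" for t y
    by (simp add: conj_add PE_conj[OF fin ufix] outer_conj uwt)
  have Cmem: "(u t ** y ** transpose (u t) \<in> C w) \<longleftrightarrow> (y \<in> C (wt t))" for t y
    unfolding C_def by (simp only: mem_Collect_eq conj2) (simp only: conj1 rank_conj[OF uorth])
  have Csets: "C v \<in> sets borel" for v
  proof -
    have "C v = {y \<in> space borel. real (rank (PE E + y + outer v v)) = real (rank (PE E + y))}"
      by (auto simp: C_def)
    also have "\<dots> \<in> sets borel"
      by (intro measurable_equality_set rank_real_meas continuous_intros)
    finally show ?thesis .
  qed
  define q where "q = measure M {\<omega> \<in> space M. Y \<omega> \<in> C w}"
  have qt: "measure M {\<omega> \<in> space M. Y \<omega> \<in> C (wt t)} = q" for t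
  proof -
    let ?f = "\<lambda>\<omega>. u t ** Y \<omega> ** transpose (u t)"
    have fmeas: "?f \<in> borel_measurable M"
      by (rule measurable_compose[OF Ymeas borel_measurable_continuous_onI[OF cont_conj]])
    have "measure M {\<omega> \<in> space M. Y \<omega> \<in> C (wt t)} = measure M (?f -` C w \<inter> space M)"
      by (rule arg_cong[where f="measure M"]) (auto simp: Cmem)
    also have "\<dots> = measure (distr M borel ?f) (C w)"
      by (rule measure_distr[OF fmeas Csets, symmetric])
    also have "\<dots> = measure (distr M borel Y) (C w)" using inv uorth[of t] by simp
    also have "\<dots> = measure M (Y -` C w \<inter> space M)"
      by (rule measure_distr[OF Ymeas Csets])
    also have "\<dots> = q" unfolding q_def by (rule arg_cong[where f="measure M"]) auto
    finally show ?thesis .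
  qed
  define G where "G = {\<omega> \<in> space M. rank (PE E + Y \<omega>) = r}"
  have Gsets: "G \<in> sets M"
  proof -
    have "(\<lambda>\<omega>. real (rank (PE E + Y \<omega>))) \<in> borel_measurable M"
      by (rule measurable_compose[OF Ymeas rank_real_meas]) (intro continuous_intros)
    then have "{\<omega> \<in> space M. real (rank (PE E + Y \<omega>)) = real r} \<in> sets M"
      by (intro measurable_equality_set) auto
    then show ?thesis by (simp add: G_def)
  qed
  have AEG: "AE \<omega> in M. \<omega> \<in> G"
    using AEr by (rule AE_mp) (rule AE_I2, auto simp: G_def)
  define A where "A = (\<lambda>t::nat. {\<omega> \<in> space M. Y \<omega> \<in> C (wt (real t))} \<inter> G)"
  have Asets: "A t \<in> sets M" for t
    unfolding A_def
    by (intro sets.Int Gsets) (rule measurable_sets[OF Ymeas Csets, unfolded vimage_def Int_def, simplified Int_def[symmetric], THEN back_subst[of "\<lambda>S. S \<in> sets M"]], auto)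
  have Aq: "measure M (A t) = q" for t
  proof -
    have "measure M (A t) = measure M {\<omega> \<in> space M. Y \<omega> \<in> C (wt (real t))}"
    proof (rule measure_eq_AE)
      show "AE x in M. (x \<in> A t) = (x \<in> {\<omega> \<in> space M. Y \<omega> \<in> C (wt (real t))})"
        using AEG by (rule AE_mp) (rule AE_I2, auto simp: A_def)
      show "A t \<in> sets M" by (rule Asets)
      show "{\<omega> \<in> space M. Y \<omega> \<in> C (wt (real t))} \<in> sets M"
        using measurable_sets[OF Ymeas Csets] by (simp add: vimage_def Int_def conj_commute)
    qed
    then show ?thesis using qt by simp
  qed
  have cnt: "card {t. t < m \<and> \<omega> \<in> A t} \<le> L" if om: "\<omega> \<in> space M" for \<omega> m
  proof (cases "\<omega> \<in> G")
    case False
    then have "{t. t < m \<and> \<omega> \<in> A t} = {}" by (auto simp: A_def)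
    then have "card {t. t < m \<and> \<omega> \<in> A t} = 0" by (metis card.empty)
    then show ?thesis by linarith
  next
    case True
    then have rk: "rank (PE E + Y \<omega>) \<noteq> CARD('n)" using rlt by (simp add: G_def)
    then have "\<exists>x. x \<noteq> 0 \<and> (PE E + Y \<omega>) *v x = 0"
      using matrix_nonfull_linear_equations_eq by metis
    then obtain x where x: "x \<noteq> 0" "(PE E + Y \<omega>) *v x = 0" by blast
    have psdYo: "psd_mat (Y \<omega>)" using psdY om by blast
    have psdQ: "psd_mat (PE E + Y \<omega>)" by (rule psd_add[OF psd_PE[OF fin] psdYo])
    have xker: "x \<in> mker (PE E + Y \<omega>)" using x by (simp add: mker_def)
    have "mker (PE E + Y \<omega>) = mker (PE E) \<inter> mker (Y \<omega>)" by (rule mker_add[OF psd_PE[OF fin] psdYo])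
    then have xV: "x \<in> V" using xker unfolding V_def by blast
    have ex: "\<exists>j<length fs. fs!j \<bullet> x \<noteq> 0"
    proof (rule ccontr)
      assume nex: "\<not> ?thesis"
      have "\<forall>b\<in>B. orthogonal x b"
      proof
        fix b assume "b \<in> B"
        then obtain j where j: "j < length fs" "b = fs ! j" using fs(1) by (metis in_set_conv_nth)
        then have "fs ! j \<bullet> x = 0" using nex by blast
        then show "orthogonal x b" using j by (simp add: orthogonal_def inner_commute)
      qed
      moreover have "x \<in> span B" using xV B(5) by simp
      ultimately have "orthogonal x x" by (meson orthogonal_to_span)
      then show False using x(1) by (simp add: orthogonal_def)
    qed
    have sub: "{t. t < m \<and> \<omega> \<in> A t} \<subseteq> {t::nat. t < m \<and> (\<Sum>j<length fs. (real t ^ j) *\<^sub>R fs!j) \<bullet> x = 0}"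
    proof clarify
      fix t assume t: "t < m" "\<omega> \<in> A t"
      then have "rank (PE E + Y \<omega> + outer (wt (real t)) (wt (real t))) = rank (PE E + Y \<omega>)"
        by (simp add: A_def C_def)
      then have "mker (PE E + Y \<omega>) \<subseteq> {x. wt (real t) \<bullet> x = 0}"
        by (rule rank_add_outer_eq[OF psdQ])
      then have "wt (real t) \<bullet> x = 0" using xker by auto
      then have "mt (real t) \<bullet> x = 0" using mtne[of "real t"] by (simp add: wt_def)
      then show "(\<Sum>j<length fs. (real t ^ j) *\<^sub>R fs!j) \<bullet> x = 0" by (simp add: mt_def L_def)
    qed
    have "card {t. t < m \<and> \<omega> \<in> A t} \<le> card {t::nat. t < m \<and> (\<Sum>j<length fs. (real t ^ j) *\<^sub>R fs!j) \<bullet> x = 0}"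
      by (rule card_mono[OF _ sub]) (rule finite_subset[of _ "{..<m}"], auto)
    also have "\<dots> \<le> L" unfolding L_def by (rule root_count[OF ex])
    finally show ?thesis .
  qed
  have mq: "real m * q \<le> real L" for m
  proof -
    have "(\<Sum>t<m. measure M (A t)) \<le> real L"
      by (rule count_bound[OF P Asets cnt])
    then show ?thesis using Aq by simp
  qed
  have q0: "q = 0"
  proof (rule ccontr)
    assume "q \<noteq> 0"
    then have qpos: "q > 0" unfolding q_def by (simp add: less_le)
    obtain m :: nat where "real L / q < real m" using reals_Archimedean2 by blast
    then have "real L < real m * q" using qpos by (simp add: field_simps)
    then show False using mq[of m] by simp
  qed
  have Nsets: "{\<omega> \<in> space M. Y \<omega> \<in> C w} \<in> sets M"
    using measurable_sets[OF Ymeas Csets] by (simp add: vimage_def Int_def conj_commute)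
  have Nnull: "{\<omega> \<in> space M. Y \<omega> \<in> C w} \<in> null_sets M"
    using Nsets q0 by (intro null_setsI) (simp add: emeasure_eq_measure q_def)
  have AEnot: "AE \<omega> in M. Y \<omega> \<notin> C w"
    by (rule AE_I'[OF Nnull]) auto
  show ?thesis
    using AEG AEnot
  proof eventually_elim
    case (elim \<omega>)
    then have om: "\<omega> \<in> space M" and rk: "rank (PE E + Y \<omega>) = r" by (auto simp: G_def)
    have psdQ: "psd_mat (PE E + Y \<omega>)" using psd_add[OF psd_PE[OF fin]] psdY om by blast
    have "rank (PE E + Y \<omega> + outer w w) \<noteq> r" using elim(2) rk by (simp add: C_def)
    then show ?case using rank_add_outer_ge[OF psdQ, of w] rank_add_outer_le[OF psdQ, of w] rk by linarith
  qed
qed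




lemma claimE:
  fixes M :: "'w measure" and Y :: "'w \<Rightarrow> real^'n^'n" and E :: "(real^'n) set" and b :: nat
  assumes P: "prob_space M" and Ymeas: "Y \<in> borel_measurable M"
    and SY: "\<forall>\<omega>\<in>space M. Y \<omega> \<in> S_rank b"
    and inv: "\<forall>u :: real^'n^'n. orthogonal_matrix u \<longrightarrow>
           distr M borel (\<lambda>\<omega>. u ** Y \<omega> ** transpose u) = distr M borel Y"
    and fin: "finite E" and po: "pairwise orthogonal E" and nE: "\<forall>e\<in>E. norm e = 1"
  shows "AE \<omega> in M. rank (PE E + Y \<omega>) = min (card E + b) CARD('n)"
  using fin po nE
proof (induction E rule: finite_induct)
  case empty
  show ?case
  proof (rule AE_I2)
    fix \<omega> assume "\<omega> \<in> space M"
    then have "rank (Y \<omega>) = b" using SY by (simp add: S_rank_def)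
    moreover have "rank (Y \<omega>) \<le> CARD('n)" using rank_bound[of "Y \<omega>"] by simp
    ultimately show "rank (PE {} + Y \<omega>) = min (card {} + b) CARD('n)" by simp
  qed
next
  case (insert w E)
  have psdY: "\<forall>\<omega>\<in>space M. psd_mat (Y \<omega>)" using SY by (simp add: S_rank_def)
  have poE: "pairwise orthogonal E" using insert(4) by (rule pairwise_subset) auto
  have IH: "AE \<omega> in M. rank (PE E + Y \<omega>) = min (card E + b) CARD('n)"
    using insert(3)[OF poE] insert(5) by simp
  have wE: "\<forall>e\<in>E. e \<bullet> w = 0"
  proof
    fix e assume "e \<in> E"
    then have "e \<noteq> w" using insert(2) by auto
    then have "orthogonal e w" using insert(4) \<open>e \<in> E\<close> by (auto simp: pairwise_def)
    then show "e \<bullet> w = 0" by (simp add: orthogonal_def)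
  qed
  have nw: "norm w = 1" using insert(5) by simp
  have PEi: "PE (insert w E) = PE E + outer w w" by (rule PE_insert[OF insert(1,2)])
  have cardi: "card (insert w E) = Suc (card E)" using insert(1,2) by simp
  show ?case
  proof (cases "card E + b < CARD('n)")
    case True
    have IH': "AE \<omega> in M. rank (PE E + Y \<omega>) = card E + b" using IH True by simp
    have "AE \<omega> in M. rank (PE E + Y \<omega> + outer w w) = Suc (card E + b)"
      by (rule key_step[OF P Ymeas psdY inv insert(1) wE nw IH' True])
    moreover have eq: "PE (insert w E) + Y \<omega> = PE E + Y \<omega> + outer w w" for \<omega>
      by (simp add: PEi add_ac)
    moreover have "min (card (insert w E) + b) CARD('n) = Suc (card E + b)" using True cardi by simp
    ultimately show ?thesis by (simp only:)
  next
    case False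
    have IH': "AE \<omega> in M. rank (PE E + Y \<omega>) = CARD('n)" using IH False by simp
    show ?thesis
      using IH' AE_space
    proof eventually_elim
      case (elim \<omega>)
      have psdQ: "psd_mat (PE E + Y \<omega>)" using psd_add[OF psd_PE[OF insert(1)]] psdY elim(2) by blast
      have "rank (PE E + Y \<omega> + outer w w) = CARD('n)"
        using rank_add_outer_ge[OF psdQ, of w] rank_bound[of "PE E + Y \<omega> + outer w w"] elim(1) by simp
      moreover have "PE (insert w E) + Y \<omega> = PE E + Y \<omega> + outer w w" by (simp add: PEi add_ac)
      ultimately have "rank (PE (insert w E) + Y \<omega>) = CARD('n)" by (simp only:)
      then show ?case using False cardi by simp
    qed
  qed
qed



lemma general:
  fixes M :: "'w measure" and Y :: "'w \<Rightarrow> real^'d^'d" and b :: nat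
  assumes P: "prob_space M"
    and Ymeas: "Y \<in> borel_measurable M"
    and SY: "\<forall>\<omega>\<in>space M. Y \<omega> \<in> S_rank b"
    and inv: "\<forall>u :: real^'d^'d. orthogonal_matrix u \<longrightarrow>
           distr M borel (\<lambda>\<omega>. u ** Y \<omega> ** transpose u) = distr M borel Y"
    and x0: "x0 \<in> S_rank a"
  shows "AE \<omega> in M. x0 + Y \<omega> \<in> S_rank (min (a + b) CARD('d))"
proof -
  have psdx: "psd_mat x0" and rkx: "rank x0 = a" using x0 by (auto simp: S_rank_def)
  let ?R = "span (rows x0)"
  obtain E where E: "E \<subseteq> ?R" "pairwise orthogonal E" "\<And>x. x \<in> E \<Longrightarrow> norm x = 1"
      "independent E" "card E = dim ?R" "span E = ?R"
    using orthonormal_basis_subspace[OF subspace_span] by metis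
  have finE: "finite E" using E(4) by (rule finiteI_independent)
  have cardE: "card E = a" using E(5) rkx by (simp add: row_rank_def)
  have mk: "mker (PE E) = mker x0"
  proof -
    have "{x. \<forall>e\<in>E. e \<bullet> x = 0} = {x. \<forall>r\<in>?R. orthogonal r x}"
    proof (rule set_eqI, rule iffI)
      fix x assume h: "x \<in> {x. \<forall>e\<in>E. e \<bullet> x = 0}"
      show "x \<in> {x. \<forall>r\<in>?R. orthogonal r x}"
      proof (clarify)
        fix r assume "r \<in> ?R"
        then have rE: "r \<in> span E" using E(6) by simp
        have "\<forall>y\<in>E. orthogonal x y" using h by (simp add: orthogonal_def inner_commute)
        then have "orthogonal x r" using rE by (meson orthogonal_to_span)
        then show "orthogonal r x" by (simp add: orthogonal_commute)
      qed
    next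
      fix x assume h: "x \<in> {x. \<forall>r\<in>?R. orthogonal r x}"
      show "x \<in> {x. \<forall>e\<in>E. e \<bullet> x = 0}" using h E(1) by (auto simp: orthogonal_def)
    qed
    then show ?thesis using mker_PE[OF finE] mker_rows[of x0] by simp
  qed
  have AE1: "AE \<omega> in M. rank (PE E + Y \<omega>) = min (card E + b) CARD('d)"
    by (rule claimE[OF P Ymeas SY inv finE E(2)]) (use E(3) in auto)
  show ?thesis
    using AE1 AE_space
  proof eventually_elim
    case (elim \<omega>)
    have psdY: "psd_mat (Y \<omega>)" using SY elim(2) by (simp add: S_rank_def)
    have "mker (x0 + Y \<omega>) = mker (PE E + Y \<omega>)"
      using mker_add[OF psdx psdY] mker_add[OF psd_PE[OF finE] psdY] mk by simp
    then have "rank (x0 + Y \<omega>) = rank (PE E + Y \<omega>)" by (rule rank_eq_mker)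
    then show ?case using elim(1) psd_add[OF psdx psdY] cardE by (simp add: S_rank_def)
  qed
qed

theorem lemma5p2:
  fixes M :: "'w measure" and Y :: "'w \<Rightarrow> real^'d^'d" and b :: nat
  assumes "prob_space M"
    and "Y \<in> borel_measurable M"
    and "\<forall>\<omega>\<in>space M. Y \<omega> \<in> S_rank b"
    and "\<forall>u :: real^'d^'d. orthogonal_matrix u \<longrightarrow>
           distr M borel (\<lambda>\<omega>. u ** Y \<omega> ** transpose u) = distr M borel Y"
  shows "(\<forall>a x0. x0 \<in> S_rank a \<longrightarrow>
            (a + b \<le> CARD('d) \<longrightarrow> (AE \<omega> in M. x0 + Y \<omega> \<in> S_rank (a + b))) \<and>
            (a + b \<ge> CARD('d) \<longrightarrow> (AE \<omega> in M. x0 + Y \<omega> \<in> S_rank CARD('d))))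
       \<and> (\<forall>a c x0. x0 \<in> S_rank c \<longrightarrow> a + b < CARD('d) \<longrightarrow>
            (AE \<omega> in M. x0 + Y \<omega> \<in> S_rank (a + b)) \<longrightarrow> c = a)"
proof (intro conjI allI impI)
  fix a :: nat and x0 :: "real^'d^'d" assume x0: "x0 \<in> S_rank a"
  note G = general[OF assms x0]
  {
    assume "a + b \<le> CARD('d)"
    then show "AE \<omega> in M. x0 + Y \<omega> \<in> S_rank (a + b)" using G by (simp add: min_def)
  next
    assume "a + b \<ge> CARD('d)"
    then have "min (a + b) CARD('d) = CARD('d)" by simp
    then show "AE \<omega> in M. x0 + Y \<omega> \<in> S_rank CARD('d)" using G by (simp only:)
  }
next
  fix a c :: nat and x0 :: "real^'d^'d" assume x0: "x0 \<in> S_rank c" and lt: "a + b < CARD('d)"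
    and AEa: "AE \<omega> in M. x0 + Y \<omega> \<in> S_rank (a + b)"
  interpret prob_space M by fact
  have G: "AE \<omega> in M. x0 + Y \<omega> \<in> S_rank (min (c + b) CARD('d))" by (rule general[OF assms x0])
  have "AE \<omega> in M. a + b = min (c + b) CARD('d)"
    using AEa G by eventually_elim (auto simp: S_rank_def)
  then have "a + b = min (c + b) CARD('d)" by simp
  then show "c = a" using lt by (auto simp: min_def split: if_splits)
qed


end
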